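(* There exists an absolute constant $c>0$ such that the following holds. Let $\Phi:\mathbb{R}^d\to\mathbb{R}$, $\Phi(x) = W^{(1)}\,\mathrm{ReLU}(W^{(0)}x + b^{(0)}) + b^{(1)}$, be a random shallow ReLU network of width $N$, where $W^{(0)}\in\mathbb{R}^{N\times d}$ has i.i.d. $\mathcal{N}(0,2/N)$ entries, $W^{(1)}\in\mathbb{R}^{1\times N}$ has i.i.d. $\mathcal{N}(0,1)$ entries, $b^{(0)}_i\sim\mathcal{D}^{(0)}_i$, $b^{(1)}\sim\mathcal{D}^{(1)}_1$ for arbitrary probability distributions on $\mathbb{R}$, all jointly independent. Then for all $t,u\ge0$, $$\mathrm{Lip}(\Phi)\ge\frac{1}{\sqrt2}\Big(1-\frac{u}{\sqrt N}\Big)_+(\sqrt d-t)_+$$ with probability at least $(1-2\exp(-ct^2))_+(1-2\exp(-cu^2))_+$.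
   Context: $\mathrm{ReLU}(t)=\max\{0,t\}$ componentwise; $\mathrm{Lip}(f)=\sup_{x\neq y}|f(x)-f(y)|/\|x-y\|_2$; $a_+=\max\{0,a\}$. *)

theory Defs
  imports "HOL-Probability.Probability"
begin

definition relu :: "real \<Rightarrow> real" where
  "relu s = max 0 s"

text \<open>Vectors of R^d are represented as functions nat => real vanishing outside {..<d}.\<close>
definition Rd :: "nat \<Rightarrow> (nat \<Rightarrow> real) set" where
  "Rd d = {x. \<forall>j\<ge>d. x j = 0}"

definition euclid_dist :: "nat \<Rightarrow> (nat \<Rightarrow> real) \<Rightarrow> (nat \<Rightarrow> real) \<Rightarrow> real" where
  "euclid_dist d x y = sqrt (\<Sum>j<d. (x j - y j)\<^sup>2)"

definition lip_const :: "nat \<Rightarrow> ((nat \<Rightarrow> real) \<Rightarrow> real) \<Rightarrow> real" where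
  "lip_const d f = Sup {\<bar>f x - f y\<bar> / euclid_dist d x y | x y. x \<in> Rd d \<and> y \<in> Rd d \<and> x \<noteq> y}"

definition shallow_net :: "nat \<Rightarrow> nat \<Rightarrow> (nat \<times> nat \<Rightarrow> real) \<Rightarrow> (nat \<Rightarrow> real) \<Rightarrow> (nat \<Rightarrow> real)
    \<Rightarrow> real \<Rightarrow> (nat \<Rightarrow> real) \<Rightarrow> real" where
  "shallow_net N d W0 W1 b0 b1 x =
     (\<Sum>i<N. W1 i * relu ((\<Sum>j<d. W0 (i, j) * x j) + b0 i)) + b1"

definition net_measure :: "nat \<Rightarrow> nat \<Rightarrow> (nat \<Rightarrow> real measure) \<Rightarrow> real measure
    \<Rightarrow> ((nat \<times> nat \<Rightarrow> real) \<times> (nat \<Rightarrow> real) \<times> (nat \<Rightarrow> real) \<times> real) measure" where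
  "net_measure N d D0 D1 =
     (PiM ({..<N} \<times> {..<d}) (\<lambda>_. density lborel (normal_density 0 (sqrt (2 / real N)))))
     \<Otimes>\<^sub>M (PiM {..<N} (\<lambda>_. density lborel std_normal_density))
     \<Otimes>\<^sub>M (PiM {..<N} D0)
     \<Otimes>\<^sub>M D1"

end

theory Submission
  imports Defs
begin


lemma PiM_coord_indep:
  fixes M :: "'i \<Rightarrow> real measure"
  assumes P: "\<And>i. i \<in> K \<Longrightarrow> prob_space (M i)" and S: "\<And>i. i \<in> K \<Longrightarrow> sets (M i) = sets borel"
    and K: "K \<noteq> {}"
  shows "prob_space.indep_vars (PiM K M) (\<lambda>_. borel) (\<lambda>k \<omega>. \<omega> k) K"
proof -
  interpret prob_space "PiM K M" by (rule prob_space_PiM) (use P in auto)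
  have rv: "random_variable borel (\<lambda>\<omega>. \<omega> k)" if "k \<in> K" for k
    using that S by (metis measurable_component_singleton measurable_cong_sets)
  have rv': "random_variable borel (\<lambda>\<omega>. \<omega> k)" for k
  proof (cases "k \<in> K")
    case True then show ?thesis by (rule rv)
  next
    case False
    have "\<And>\<omega>. \<omega> \<in> space (PiM K M) \<Longrightarrow> \<omega> k = undefined"
      using False by (auto simp: space_PiM PiE_def extensional_def)
    then show ?thesis by (subst measurable_cong[where g="\<lambda>_. undefined"]) auto
  qed
  have d1: "distr (PiM K M) borel (\<lambda>\<omega>. \<omega> k) = M k" if "k \<in> K" for k
  proof -
    have "distr (PiM K M) borel (\<lambda>\<omega>. \<omega> k) = distr (PiM K M) (M k) (\<lambda>\<omega>. \<omega> k)"
      by (rule distr_cong) (use S that in auto)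
    also have "\<dots> = M k" by (rule distr_PiM_component) (use P that in auto)
    finally show ?thesis .
  qed
  have "distr (PiM K M) (PiM K (\<lambda>_. borel)) (\<lambda>x. \<lambda>i\<in>K. x i) = distr (PiM K M) (PiM K M) (\<lambda>x. x)"
    by (rule distr_cong) (auto simp: S space_PiM PiE_def intro!: sets_PiM_cong)
  also have "\<dots> = PiM K M" by simp
  also have "\<dots> = PiM K (\<lambda>k. distr (PiM K M) borel (\<lambda>\<omega>. \<omega> k))"
    by (rule PiM_cong) (auto simp: d1)
  finally show ?thesis
    by (subst indep_vars_iff_distr_eq_PiM[OF K rv']) 
qed



lemma gauss_mgf:
  assumes l: "l \<ge> 0"
  shows "(\<integral>\<^sup>+x. ennreal (std_normal_density x * exp (- l * x\<^sup>2)) \<partial>lborel) = ennreal (1 / sqrt (1 + 2 * l))"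
proof -
  define s where "s = 1 / sqrt (1 + 2 * l)"
  have s: "s > 0" using l by (simp add: s_def)
  have eq: "std_normal_density x * exp (- l * x\<^sup>2) = s * normal_density 0 s x" for x
  proof -
    have "s\<^sup>2 = 1 / (1 + 2 * l)" using l by (simp add: s_def power_divide)
    then show ?thesis using l s
      by (simp add: normal_density_def std_normal_density_def mult_exp_exp real_sqrt_mult 
          real_sqrt_divide s_def field_simps)
  qed
  have "(\<integral>\<^sup>+x. ennreal (std_normal_density x * exp (- l * x\<^sup>2)) \<partial>lborel)
      = (\<integral>\<^sup>+x. ennreal s * ennreal (normal_density 0 s x) \<partial>lborel)"
    by (rule nn_integral_cong, simp only: eq, use s in \<open>simp add: ennreal_mult\<close>)
  also have "\<dots> = ennreal s * (\<integral>\<^sup>+x. ennreal (normal_density 0 s x) \<partial>lborel)"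
    by (rule nn_integral_cmult) simp
  also have "(\<integral>\<^sup>+x. ennreal (normal_density 0 s x) \<partial>lborel) = 1"
    using s by (subst nn_integral_eq_integral) (auto intro!: integrable_normal_density)
  finally show ?thesis by (simp add: s_def)
qed



lemma chi_real_bound:
  fixes n :: nat and t m l :: real
  assumes t0: "0 < t" and tn: "t < sqrt n"
  defines "m \<equiv> (sqrt (real n) - t)\<^sup>2"
  defines "l \<equiv> (real n - m) / (4 * real n)"
  shows "l > 0" "exp (l * m) * (1 / sqrt (1 + 2 * l)) ^ n \<le> exp (- (t\<^sup>2 / 8))"
proof -
  have n0: "n > 0" using t0 tn by (cases n) auto
  have sq: "(sqrt n)\<^sup>2 = n" by simp
  define a where "a = real n - m"
  have a_eq: "a = 2 * t * sqrt n - t\<^sup>2" unfolding a_def m_def using sq by (simp add: power2_diff)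
  have "t * t \<le> t * sqrt n" using tn t0 by (intro mult_left_mono) auto
  then have a_ge: "a \<ge> t * sqrt n" using a_eq by (simp add: power2_eq_square)
  have a_le: "a \<le> n" unfolding a_def m_def by simp
  have "t * sqrt n > 0" using t0 n0 by simp
  then have a_pos: "a > 0" using a_ge by linarith
  have l_def': "l = a / (4 * real n)" by (simp add: l_def a_def)
  show lpos: "l > 0" using a_pos n0 l_def' by simp
  have "l \<le> real n / (4 * real n)" unfolding l_def' by (intro divide_right_mono) (use a_le in auto)
  also have "real n / (4 * real n) = 1 / 4" using n0 by simp
  finally have l_le: "2 * l \<le> 1" by simp
  have ln_b: "2 * l - (2 * l)\<^sup>2 \<le> ln (1 + 2 * l)"
    using ln_one_plus_pos_lower_bound[of "2 * l"] lpos l_le by simp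
  have q: "1 / sqrt (1 + 2 * l) \<le> exp (- l + 2 * l\<^sup>2)"
  proof -
    have "sqrt (1 + 2 * l) = exp (ln (1 + 2 * l) / 2)"
      using lpos powr_half_sqrt[of "1 + 2 * l"] by (simp add: powr_def)
    then have "1 / sqrt (1 + 2 * l) = exp (- (ln (1 + 2 * l) / 2))"
      by (subst exp_minus) (simp add: inverse_eq_divide)
    also have "\<dots> \<le> exp (- l + 2 * l\<^sup>2)"
      using ln_b by (simp add: power2_eq_square)
    finally show ?thesis .
  qed
  have "(1 / sqrt (1 + 2 * l)) ^ n \<le> exp (- l + 2 * l\<^sup>2) ^ n"
    using q lpos by (intro power_mono) auto
  also have "\<dots> = exp (n * (- l + 2 * l\<^sup>2))" by (simp add: exp_of_nat_mult)
  finally have "exp (l * m) * (1 / sqrt (1 + 2 * l)) ^ n \<le> exp (l * m) * exp (n * (- l + 2 * l\<^sup>2))"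
    by (intro mult_left_mono) auto
  also have "\<dots> = exp (- (a\<^sup>2 / (8 * n)))"
  proof -
    have e1: "l * m + n * (- l + 2 * l\<^sup>2) = - (l * a) + 2 * n * l\<^sup>2"
      by (simp add: a_def algebra_simps power2_eq_square)
    have e2: "l * a = a\<^sup>2 / (4 * n)" by (simp add: l_def' power2_eq_square)
    have e3: "2 * n * l\<^sup>2 = a\<^sup>2 / (8 * n)" using n0 by (simp add: l_def' power2_eq_square)
    have "l * m + n * (- l + 2 * l\<^sup>2) = - (a\<^sup>2 / (8 * n))"
      unfolding e1 e2 e3 by simp
    then show ?thesis by (simp add: mult_exp_exp)
  qed
  also have "\<dots> \<le> exp (- (t\<^sup>2 / 8))"
  proof -
    have "(t * sqrt n)\<^sup>2 \<le> a\<^sup>2" using a_ge t0 by (intro power_mono) auto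
    then have "t\<^sup>2 * n \<le> a\<^sup>2" by (simp add: power_mult_distrib)
    then have "t\<^sup>2 / 8 \<le> a\<^sup>2 / (8 * n)" using n0 by (simp add: divide_simps)
    then show ?thesis by simp
  qed
  finally show "exp (l * m) * (1 / sqrt (1 + 2 * l)) ^ n \<le> exp (- (t\<^sup>2 / 8))" .
qed



lemma (in prob_space) chi_lower:
  fixes Z :: "nat \<Rightarrow> 'a \<Rightarrow> real"
  assumes ind: "indep_vars (\<lambda>_. borel) Z {..<n}"
    and dist: "\<And>j. j < n \<Longrightarrow> distributed M lborel (Z j) std_normal_density"
    and t: "t \<ge> 0"
  shows "prob {\<omega>\<in>space M. (max 0 (sqrt n - t))\<^sup>2 \<le> (\<Sum>j<n. (Z j \<omega>)\<^sup>2)} \<ge> 1 - exp (- (t\<^sup>2 / 8))"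
proof -
  have Zm[measurable]: "Z j \<in> borel_measurable M" if "j < n" for j
    using ind that unfolding indep_vars_def by auto
  have Sm[measurable]: "(\<lambda>\<omega>. \<Sum>j<n. (Z j \<omega>)\<^sup>2) \<in> borel_measurable M"
    by (intro borel_measurable_sum borel_measurable_power) (auto simp: Zm)
  let ?S = "\<lambda>\<omega>. \<Sum>j<n. (Z j \<omega>)\<^sup>2"
  show ?thesis
  proof (cases "t = 0 \<or> t \<ge> sqrt n")
    case True
    show ?thesis
    proof (cases "t = 0")
      case True then show ?thesis by simp
    next
      case False
      then have "t \<ge> sqrt n" using True by auto
      then have "{\<omega>\<in>space M. (max 0 (sqrt n - t))\<^sup>2 \<le> ?S \<omega>} = space M"
        by (auto simp: max_def intro!: sum_nonneg)
      then show ?thesis using prob_space by simp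
    qed
  next
    case False
    then have t0: "0 < t" and tn: "t < sqrt n" using t by auto
    define m where "m = (sqrt (real n) - t)\<^sup>2"
    define l where "l = (real n - m) / (4 * real n)"
    note rb = chi_real_bound[OF t0 tn, folded m_def, folded l_def]
    have mx: "max 0 (sqrt n - t) = sqrt n - t" using tn by simp
    have "emeasure M {x\<in>space M. ?S x \<le> m} \<le>
           ennreal (exp (l * m)) * (\<integral>\<^sup>+x. ennreal (exp (- l * ?S x)) * indicator (space M) x \<partial>M)"
      by (rule Chernoff_ineq_nn_integral_le) (use rb in auto)
    also have "(\<integral>\<^sup>+x. ennreal (exp (- l * ?S x)) * indicator (space M) x \<partial>M)
             = (\<integral>\<^sup>+x. ennreal (\<Prod>j<n. exp (- l * (Z j x)\<^sup>2)) \<partial>M)"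
      by (intro nn_integral_cong) (simp add: exp_sum sum_distrib_left)
    also have "\<dots> = (\<integral>\<^sup>+x. (\<Prod>j<n. ennreal (exp (- l * (Z j x)\<^sup>2))) \<partial>M)"
      by (simp add: prod_ennreal)
    also have "\<dots> = (\<Prod>j<n. \<integral>\<^sup>+x. ennreal (exp (- l * (Z j x)\<^sup>2)) \<partial>M)"
    proof (rule indep_vars_nn_integral)
      show "indep_vars (\<lambda>_. borel) (\<lambda>j x. ennreal (exp (- l * (Z j x)\<^sup>2))) {..<n}"
        by (rule indep_vars_compose2[OF ind, where Y="\<lambda>_ y. ennreal (exp (- l * y\<^sup>2))"]) auto
    qed auto
    also have "\<dots> = (\<Prod>j<n. ennreal (1 / sqrt (1 + 2 * l)))"
    proof (rule prod.cong[OF refl])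
      fix j assume "j \<in> {..<n}"
      then have d: "distributed M lborel (Z j) std_normal_density" using dist by auto
      have "(\<integral>\<^sup>+x. ennreal (exp (- l * (Z j x)\<^sup>2)) \<partial>M) =
            (\<integral>\<^sup>+x. ennreal (std_normal_density x) * ennreal (exp (- l * x\<^sup>2)) \<partial>lborel)"
        by (rule distributed_nn_integral[OF d, symmetric]) auto
      also have "\<dots> = (\<integral>\<^sup>+x. ennreal (std_normal_density x * exp (- l * x\<^sup>2)) \<partial>lborel)"
        by (intro nn_integral_cong) (simp add: ennreal_mult)
      also have "\<dots> = ennreal (1 / sqrt (1 + 2 * l))"
        by (rule gauss_mgf) (use rb in auto)
      finally show "(\<integral>\<^sup>+x. ennreal (exp (- l * (Z j x)\<^sup>2)) \<partial>M) = ennreal (1 / sqrt (1 + 2 * l))" .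
    qed
    also have "\<dots> = ennreal ((1 / sqrt (1 + 2 * l)) ^ n)"
      using rb by (simp add: prod_ennreal ennreal_power)
    finally have "emeasure M {x\<in>space M. ?S x \<le> m} \<le> ennreal (exp (l * m) * (1 / sqrt (1 + 2 * l)) ^ n)"
      using rb by (simp add: ennreal_mult)
    then have "prob {x\<in>space M. ?S x \<le> m} \<le> exp (l * m) * (1 / sqrt (1 + 2 * l)) ^ n"
      using rb by (simp add: emeasure_eq_measure ennreal_le_iff)
    then have p1: "prob {x\<in>space M. ?S x \<le> m} \<le> exp (- (t\<^sup>2 / 8))" using rb by linarith
    have "space M - {x\<in>space M. ?S x \<le> m} \<subseteq> {\<omega>\<in>space M. (max 0 (sqrt n - t))\<^sup>2 \<le> ?S \<omega>}"
      unfolding mx m_def by auto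
    then have "prob (space M - {x\<in>space M. ?S x \<le> m}) \<le> prob {\<omega>\<in>space M. (max 0 (sqrt n - t))\<^sup>2 \<le> ?S \<omega>}"
      by (intro finite_measure_mono) auto
    moreover have "prob (space M - {x\<in>space M. ?S x \<le> m}) = 1 - prob {x\<in>space M. ?S x \<le> m}"
      by (rule prob_compl) auto
    ultimately show ?thesis using p1 by linarith
  qed
qed



lemma coord_block_indep:
  fixes P :: "('k \<Rightarrow> real) measure"
  assumes PS: "prob_space P"
    and ci: "prob_space.indep_vars P (\<lambda>_. borel) (\<lambda>k \<omega>. \<omega> k) K"
    and B: "\<And>j. j \<in> L \<Longrightarrow> B j \<subseteq> K" and D: "disjoint_family_on B L"
    and g: "\<And>j. j \<in> L \<Longrightarrow> g j \<in> borel_measurable (PiM (B j) (\<lambda>_. borel))"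
    and Y: "\<And>j \<omega>. j \<in> L \<Longrightarrow> Y j \<omega> = g j (restrict \<omega> (B j))"
  shows "prob_space.indep_vars P (\<lambda>_. (borel :: real measure)) Y L"
proof -
  interpret prob_space P by (rule PS)
  have "indep_vars (\<lambda>j. PiM (B j) (\<lambda>_. borel)) (\<lambda>j \<omega>. restrict (\<lambda>i. \<omega> i) (B j)) L"
    by (rule indep_vars_restrict[OF ci B D])
  then have "indep_vars (\<lambda>_. borel) (\<lambda>j \<omega>. g j (restrict (\<lambda>i. \<omega> i) (B j))) L"
    by (rule indep_vars_compose2) (rule g)
  then show ?thesis
    by (rule indep_vars_cong[THEN iffD1, rotated 3]) (auto simp: Y)
qed

lemma PiM_coord_distributed:
  fixes \<sigma> :: real
  assumes "k \<in> K" "\<sigma> > 0"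
  shows "distributed (PiM K (\<lambda>_. density lborel (normal_density 0 \<sigma>))) lborel (\<lambda>\<omega>. \<omega> k) (normal_density 0 \<sigma>)"
proof -
  let ?D = "density lborel (normal_density 0 \<sigma>)"
  have "distr (PiM K (\<lambda>_. ?D)) lborel (\<lambda>\<omega>. \<omega> k) = distr (PiM K (\<lambda>_. ?D)) ?D (\<lambda>\<omega>. \<omega> k)"
    by (rule distr_cong) auto
  also have "\<dots> = ?D" by (rule distr_PiM_component) (use assms prob_space_normal_density in auto)
  finally have e: "distr (PiM K (\<lambda>_. ?D)) lborel (\<lambda>\<omega>. \<omega> k) = ?D" .
  have m: "(\<lambda>\<omega>. \<omega> k) \<in> measurable (PiM K (\<lambda>_. ?D)) ?D" using assms by (intro measurable_component_singleton)
  have "measurable (PiM K (\<lambda>_. ?D)) ?D = measurable (PiM K (\<lambda>_. ?D)) lborel" by (rule measurable_cong_sets) auto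
  then show ?thesis unfolding distributed_def using e m by auto
qed



lemma W0_event:
  fixes w :: "nat \<Rightarrow> real" and \<sigma> t :: real and N d :: nat
  assumes \<sigma>: "\<sigma> > 0" and r: "(\<Sum>i<N. (w i)\<^sup>2) > 0" and t: "t \<ge> 0" and d: "d \<ge> 1"
  shows "measure (PiM ({..<N} \<times> {..<d}) (\<lambda>_. density lborel (normal_density 0 \<sigma>)))
     {W \<in> space (PiM ({..<N} \<times> {..<d}) (\<lambda>_. density lborel (normal_density 0 \<sigma>))).
        \<sigma>\<^sup>2 * (\<Sum>i<N. (w i)\<^sup>2) * (max 0 (sqrt d - t))\<^sup>2 \<le> (\<Sum>j<d. (\<Sum>i<N. w i * W (i,j))\<^sup>2)}
     \<ge> 1 - exp (- (t\<^sup>2 / 8))"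
proof -
  define A where "A = PiM ({..<N} \<times> {..<d}) (\<lambda>_. density lborel (normal_density 0 \<sigma>))"
  define K where "K = {..<N} \<times> {..<d}"
  interpret A: prob_space A unfolding A_def
    by (rule prob_space_PiM) (use \<sigma> prob_space_normal_density in auto)
  have N: "N \<ge> 1" using r by (cases N) auto
  have ci: "A.indep_vars (\<lambda>_. borel) (\<lambda>k \<omega>. \<omega> k) K" unfolding A_def K_def
    by (rule PiM_coord_indep) (use \<sigma> prob_space_normal_density N d in \<open>auto simp: lessThan_empty_iff\<close>)
  define rr where "rr = sqrt (\<Sum>i<N. (w i)\<^sup>2)"
  have rr: "rr > 0" using r by (simp add: rr_def)
  define s where "s = \<sigma> * rr"
  have s: "s > 0" using rr \<sigma> by (simp add: s_def)
  define Z where "Z j W = (\<Sum>i<N. w i * W (i,j)) / s" for j :: nat and W :: "nat \<times> nat \<Rightarrow> real"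
  have compm: "(\<lambda>f. f k) \<in> borel_measurable (PiM B (\<lambda>_. borel))" if "k \<in> B" for k and B :: "(nat \<times> nat) set"
    using that by (rule measurable_component_singleton)
  have indZ: "A.indep_vars (\<lambda>_. borel) Z {..<d}"
  proof (rule coord_block_indep[OF A.prob_space_axioms ci, where B="\<lambda>j. {..<N} \<times> {j}"
        and g="\<lambda>j f. (\<Sum>i<N. w i * f (i,j)) / s"])
    show "disjoint_family_on (\<lambda>j. {..<N} \<times> {j}) {..<d}" by (auto simp: disjoint_family_on_def)
    fix j assume j: "j \<in> {..<d}"
    show "{..<N} \<times> {j} \<subseteq> K" using j by (auto simp: K_def)
    show "(\<lambda>f. (\<Sum>i<N. w i * f (i,j)) / s) \<in> borel_measurable (PiM ({..<N} \<times> {j}) (\<lambda>_. borel))"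
      by (intro borel_measurable_divide borel_measurable_sum borel_measurable_times compm) auto
    fix \<omega> show "Z j \<omega> = (\<Sum>i<N. w i * restrict \<omega> ({..<N} \<times> {j}) (i,j)) / s"
      by (simp add: Z_def)
  qed
  have distZ: "distributed A lborel (Z j) std_normal_density" if j: "j < d" for j
  proof -
    define I where "I = {i. i < N \<and> w i \<noteq> 0}"
    have I: "finite I" "I \<noteq> {}" 
      using r by (auto simp: I_def intro: ccontr) 
    define X where "X i W = w i * W (i,j)" for i W
    have indX: "A.indep_vars (\<lambda>_. borel) X I"
    proof (rule coord_block_indep[OF A.prob_space_axioms ci, where B="\<lambda>i. {(i,j)}"
          and g="\<lambda>i f. w i * f (i,j)"])
      show "disjoint_family_on (\<lambda>i. {(i,j)}) I" by (auto simp: disjoint_family_on_def)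
      fix i assume i: "i \<in> I"
      show "{(i,j)} \<subseteq> K" using i j by (auto simp: K_def I_def)
      show "(\<lambda>f. w i * f (i,j)) \<in> borel_measurable (PiM {(i,j)} (\<lambda>_. borel))"
        by (intro borel_measurable_times compm) auto
      fix \<omega> show "X i \<omega> = w i * restrict \<omega> {(i,j)} (i,j)" by (simp add: X_def)
    qed
    have distX: "distributed A lborel (X i) (normal_density 0 (\<bar>w i\<bar> * \<sigma>))" if i: "i \<in> I" for i
    proof -
      have c: "distributed A lborel (\<lambda>W. W (i,j)) (normal_density 0 \<sigma>)"
        unfolding A_def by (rule PiM_coord_distributed) (use i j \<sigma> in \<open>auto simp: I_def\<close>)
      have "distributed A lborel (\<lambda>W. 0 + w i * W (i,j)) (normal_density (0 + w i * 0) (\<bar>w i\<bar> * \<sigma>))"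
        by (rule A.normal_density_affine[OF c \<sigma>]) (use i in \<open>auto simp: I_def\<close>)
      then show ?thesis by (simp add: X_def[abs_def])
    qed
    have "distributed A lborel (\<lambda>x. \<Sum>i\<in>I. X i x) (normal_density (\<Sum>i\<in>I. 0) (sqrt (\<Sum>i\<in>I. (\<bar>w i\<bar> * \<sigma>)\<^sup>2)))"
      by (rule A.sum_indep_normal[OF I indX]) (use \<sigma> distX in \<open>auto simp: I_def\<close>)
    moreover have "sqrt (\<Sum>i\<in>I. (\<bar>w i\<bar> * \<sigma>)\<^sup>2) = s"
    proof -
      have "(\<Sum>i\<in>I. (\<bar>w i\<bar> * \<sigma>)\<^sup>2) = \<sigma>\<^sup>2 * (\<Sum>i\<in>I. (w i)\<^sup>2)"
        by (simp add: sum_distrib_left power_mult_distrib mult.commute)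
      also have "(\<Sum>i\<in>I. (w i)\<^sup>2) = (\<Sum>i<N. (w i)\<^sup>2)"
        by (rule sum.mono_neutral_left) (auto simp: I_def)
      finally show ?thesis using \<sigma> rr by (simp add: s_def rr_def real_sqrt_mult)
    qed
    ultimately have "distributed A lborel (\<lambda>x. \<Sum>i\<in>I. X i x) (normal_density 0 s)" by simp
    then have "distributed A lborel (\<lambda>x. ((\<Sum>i\<in>I. X i x) - 0) / s) std_normal_density"
      using A.normal_standard_normal_convert[OF s] by simp
    moreover have "(\<lambda>x. ((\<Sum>i\<in>I. X i x) - 0) / s) = Z j"
    proof
      fix x
      have "(\<Sum>i\<in>I. X i x) = (\<Sum>i<N. w i * x (i,j))"
        unfolding X_def by (rule sum.mono_neutral_left) (auto simp: I_def)
      then show "((\<Sum>i\<in>I. X i x) - 0) / s = Z j x" by (simp add: Z_def)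
    qed
    ultimately show ?thesis by simp
  qed
  have main: "A.prob {\<omega>\<in>space A. (max 0 (sqrt d - t))\<^sup>2 \<le> (\<Sum>j<d. (Z j \<omega>)\<^sup>2)} \<ge> 1 - exp (- (t\<^sup>2 / 8))"
    by (rule A.chi_lower[OF indZ distZ t]) auto
  have "{\<omega>\<in>space A. (max 0 (sqrt d - t))\<^sup>2 \<le> (\<Sum>j<d. (Z j \<omega>)\<^sup>2)} =
        {W \<in> space A. \<sigma>\<^sup>2 * (\<Sum>i<N. (w i)\<^sup>2) * (max 0 (sqrt d - t))\<^sup>2 \<le> (\<Sum>j<d. (\<Sum>i<N. w i * W (i,j))\<^sup>2)}"
  proof -
    have ss: "\<sigma>\<^sup>2 * (\<Sum>i<N. (w i)\<^sup>2) = s\<^sup>2"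
      using r by (simp add: s_def rr_def power_mult_distrib)
    have "(\<Sum>j<d. (Z j W)\<^sup>2) = (\<Sum>j<d. (\<Sum>i<N. w i * W (i,j))\<^sup>2) / s\<^sup>2" for W
      unfolding Z_def power_divide by (rule sum_divide_distrib[symmetric])
    then show ?thesis unfolding ss using s
      by (auto simp: le_divide_eq mult.commute)
  qed
  then show ?thesis using main by (simp add: A_def)
qed



lemma relu_lip: "\<bar>relu a - relu b\<bar> \<le> \<bar>a - b\<bar>"
  by (simp add: relu_def max_def)

lemma relu_odd_bound: "\<bar>relu (p + b) - relu (- p + b) - p\<bar> \<le> 2 * \<bar>b\<bar>"
  unfolding relu_def max_def by (auto simp: abs_if)

lemma relu_nonneg: "relu a \<ge> 0" by (simp add: relu_def)

lemma euclid_dist_L2: "euclid_dist d x y = L2_set (\<lambda>j. x j - y j) {..<d}"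
  by (simp add: euclid_dist_def L2_set_def)

lemma euclid_pos:
  assumes "x \<in> Rd d" "y \<in> Rd d" "x \<noteq> y"
  shows "euclid_dist d x y > 0"
proof -
  obtain j where j: "x j \<noteq> y j" using assms(3) by auto
  have jd: "j < d"
  proof (rule ccontr)
    assume "\<not> j < d"
    then have "x j = 0" "y j = 0" using assms(1,2) by (auto simp: Rd_def)
    with j show False by simp
  qed
  have "0 < (x j - y j)\<^sup>2" using j by simp
  also have "\<dots> \<le> (\<Sum>j<d. (x j - y j)\<^sup>2)"
    by (rule member_le_sum) (use jd in auto)
  finally show ?thesis by (simp add: euclid_dist_def)
qed

lemma net_lipschitz:
  "\<bar>shallow_net N d W0 W1 b0 b1 x - shallow_net N d W0 W1 b0 b1 y\<bar>
     \<le> (\<Sum>i<N. \<bar>W1 i\<bar> * L2_set (\<lambda>j. W0 (i,j)) {..<d}) * euclid_dist d x y"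
proof -
  have "\<bar>shallow_net N d W0 W1 b0 b1 x - shallow_net N d W0 W1 b0 b1 y\<bar>
      = \<bar>\<Sum>i<N. W1 i * (relu ((\<Sum>j<d. W0 (i, j) * x j) + b0 i) - relu ((\<Sum>j<d. W0 (i, j) * y j) + b0 i))\<bar>"
    unfolding shallow_net_def by (simp add: sum_subtractf[symmetric] right_diff_distrib)
  also have "\<dots> \<le> (\<Sum>i<N. \<bar>W1 i * (relu ((\<Sum>j<d. W0 (i, j) * x j) + b0 i) - relu ((\<Sum>j<d. W0 (i, j) * y j) + b0 i))\<bar>)"
    by (rule sum_abs)
  also have "\<dots> \<le> (\<Sum>i<N. \<bar>W1 i\<bar> * L2_set (\<lambda>j. W0 (i,j)) {..<d} * euclid_dist d x y)"
  proof (rule sum_mono)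
    fix i
    have "\<bar>relu ((\<Sum>j<d. W0 (i, j) * x j) + b0 i) - relu ((\<Sum>j<d. W0 (i, j) * y j) + b0 i)\<bar>
        \<le> \<bar>(\<Sum>j<d. W0 (i, j) * x j) - (\<Sum>j<d. W0 (i, j) * y j)\<bar>"
      using relu_lip[of "(\<Sum>j<d. W0 (i, j) * x j) + b0 i" "(\<Sum>j<d. W0 (i, j) * y j) + b0 i"] by simp
    also have "\<dots> = \<bar>\<Sum>j<d. W0 (i, j) * (x j - y j)\<bar>"
      by (simp add: sum_subtractf right_diff_distrib)
    also have "\<dots> \<le> (\<Sum>j<d. \<bar>W0 (i, j)\<bar> * \<bar>x j - y j\<bar>)"
      by (rule order_trans[OF sum_abs]) (simp add: abs_mult)
    also have "\<dots> \<le> L2_set (\<lambda>j. W0 (i,j)) {..<d} * L2_set (\<lambda>j. x j - y j) {..<d}"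
      by (rule L2_set_mult_ineq)
    finally have "\<bar>relu ((\<Sum>j<d. W0 (i, j) * x j) + b0 i) - relu ((\<Sum>j<d. W0 (i, j) * y j) + b0 i)\<bar>
        \<le> L2_set (\<lambda>j. W0 (i,j)) {..<d} * euclid_dist d x y" by (simp add: euclid_dist_L2)
    then show "\<bar>W1 i * (relu ((\<Sum>j<d. W0 (i, j) * x j) + b0 i) - relu ((\<Sum>j<d. W0 (i, j) * y j) + b0 i))\<bar>
        \<le> \<bar>W1 i\<bar> * L2_set (\<lambda>j. W0 (i,j)) {..<d} * euclid_dist d x y"
      unfolding abs_mult mult.assoc by (rule mult_left_mono) auto
  qed
  also have "\<dots> = (\<Sum>i<N. \<bar>W1 i\<bar> * L2_set (\<lambda>j. W0 (i,j)) {..<d}) * euclid_dist d x y"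
    by (simp add: sum_distrib_right)
  finally show ?thesis .
qed

definition lipset :: "nat \<Rightarrow> ((nat \<Rightarrow> real) \<Rightarrow> real) \<Rightarrow> real set" where
  "lipset d f = {\<bar>f x - f y\<bar> / euclid_dist d x y | x y. x \<in> Rd d \<and> y \<in> Rd d \<and> x \<noteq> y}"

lemma lip_const_lipset: "lip_const d f = Sup (lipset d f)"
  by (simp add: lip_const_def lipset_def)

lemma lipset_bdd: "bdd_above (lipset d (shallow_net N d W0 W1 b0 b1))"
proof -
  let ?L = "\<Sum>i<N. \<bar>W1 i\<bar> * L2_set (\<lambda>j. W0 (i,j)) {..<d}"
  have "q \<le> ?L" if qin: "q \<in> lipset d (shallow_net N d W0 W1 b0 b1)" for q
  proof -
    obtain x y where xy: "x \<in> Rd d" "y \<in> Rd d" "x \<noteq> y"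
      and q: "q = \<bar>shallow_net N d W0 W1 b0 b1 x - shallow_net N d W0 W1 b0 b1 y\<bar> / euclid_dist d x y"
      using qin unfolding lipset_def by blast
    have "euclid_dist d x y > 0" using euclid_pos[OF xy] .
    then show ?thesis unfolding q using net_lipschitz[of N d W0 W1 b0 b1 x y]
      by (simp add: divide_le_eq)
  qed
  then show ?thesis by (auto simp: bdd_above_def)
qed

lemma lipset_ne: "d \<ge> 1 \<Longrightarrow> lipset d f \<noteq> {}"
proof -
  assume d: "d \<ge> 1"
  let ?x = "\<lambda>j::nat. if j = 0 then (1::real) else 0"
  have "?x \<in> Rd d" "(\<lambda>_. 0) \<in> Rd d" "?x \<noteq> (\<lambda>_. 0)" using d by (auto simp: Rd_def fun_eq_iff)
  then show ?thesis unfolding lipset_def by blast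
qed

lemma lip_ge_elem:
  assumes "x \<in> Rd d" "y \<in> Rd d" "x \<noteq> y"
  shows "\<bar>shallow_net N d W0 W1 b0 b1 x - shallow_net N d W0 W1 b0 b1 y\<bar> / euclid_dist d x y
    \<le> lip_const d (shallow_net N d W0 W1 b0 b1)"
  unfolding lip_const_lipset by (rule cSup_upper[OF _ lipset_bdd]) (use assms in \<open>auto simp: lipset_def\<close>)

lemma lip_nonneg:
  assumes "d \<ge> 1"
  shows "0 \<le> lip_const d (shallow_net N d W0 W1 b0 b1)"
proof -
  obtain q where "q \<in> lipset d (shallow_net N d W0 W1 b0 b1)" using lipset_ne[OF assms] by blast
  moreover have "q \<ge> 0" using calculation unfolding lipset_def euclid_dist_def
    by (auto intro!: divide_nonneg_nonneg sum_nonneg)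
  ultimately show ?thesis unfolding lip_const_lipset by (intro cSup_upper2[OF _ _ lipset_bdd])
qed



lemma lip_lower_v:
  assumes d: "d \<ge> 1"
  shows "sqrt (\<Sum>j<d. (\<Sum>i<N. W1 i * W0 (i,j))\<^sup>2) / 2 \<le> lip_const d (shallow_net N d W0 W1 b0 b1)"
proof -
  define v where "v j = (\<Sum>i<N. W1 i * W0 (i,j))" for j
  define V where "V = sqrt (\<Sum>j<d. (v j)\<^sup>2)"
  define f where "f = shallow_net N d W0 W1 b0 b1"
  define a where "a i = (\<Sum>j<d. W0 (i,j) * v j)" for i
  define K where "K = (\<Sum>i<N. \<bar>W1 i\<bar> * (2 * \<bar>b0 i\<bar>))"
  have K0: "K \<ge> 0" by (simp add: K_def sum_nonneg)
  show ?thesis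
  proof (cases "V = 0")
    case True
    then show ?thesis using lip_nonneg[OF d] by (simp add: V_def v_def)
  next
    case False
    have "V \<ge> 0" by (simp add: V_def sum_nonneg)
    then have V: "V > 0" using False by simp
    have "\<exists>j<d. v j \<noteq> 0"
    proof (rule ccontr)
      assume "\<not> (\<exists>j<d. v j \<noteq> 0)"
      then have "V = 0" by (simp add: V_def)
      with False show False by simp
    qed
    then obtain j0 where j0: "j0 < d" "v j0 \<noteq> 0" by blast
    have Va: "(\<Sum>i<N. W1 i * a i) = V\<^sup>2"
    proof -
      have "(\<Sum>i<N. W1 i * a i) = (\<Sum>i<N. \<Sum>j<d. W1 i * W0 (i,j) * v j)"
        by (simp add: a_def sum_distrib_left mult.assoc)
      also have "\<dots> = (\<Sum>j<d. \<Sum>i<N. W1 i * W0 (i,j) * v j)" by (rule sum.swap)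
      also have "\<dots> = (\<Sum>j<d. (v j)\<^sup>2)"
        by (simp add: v_def power2_eq_square sum_distrib_right)
      finally show ?thesis by (simp add: V_def sum_nonneg)
    qed
    have key: "(s * V\<^sup>2 - K) / (2 * s * V) \<le> lip_const d f" if s: "s > 0" for s
    proof -
      define x where "x j = (if j < d then s * v j else 0)" for j
      define y where "y j = (if j < d then - (s * v j) else 0)" for j
      have xy: "x \<in> Rd d" "y \<in> Rd d" by (auto simp: Rd_def x_def y_def)
      have "x j0 \<noteq> y j0" using j0 s by (simp add: x_def y_def)
      then have ne: "x \<noteq> y" by auto
      have dist: "euclid_dist d x y = 2 * s * V"
      proof -
        have "(\<Sum>j<d. (x j - y j)\<^sup>2) = (2 * s)\<^sup>2 * (\<Sum>j<d. (v j)\<^sup>2)"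
          by (simp add: x_def y_def sum_distrib_left power2_eq_square algebra_simps)
        then show ?thesis using s by (simp add: euclid_dist_def V_def real_sqrt_mult)
      qed
      have fx: "(\<Sum>j<d. W0 (i, j) * x j) = s * a i" for i
        by (simp add: x_def a_def sum_distrib_left algebra_simps)
      have fy: "(\<Sum>j<d. W0 (i, j) * y j) = - (s * a i)" for i
        by (simp add: y_def a_def sum_distrib_left sum_negf algebra_simps)
      have "f x - f y = (\<Sum>i<N. W1 i * (relu (s * a i + b0 i) - relu (- (s * a i) + b0 i)))"
        unfolding f_def shallow_net_def fx fy by (simp add: sum_subtractf[symmetric] right_diff_distrib)
      also have "\<dots> = s * V\<^sup>2 + (\<Sum>i<N. W1 i * (relu (s * a i + b0 i) - relu (- (s * a i) + b0 i) - s * a i))"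
      proof -
        define R where "R i = relu (s * a i + b0 i) - relu (- (s * a i) + b0 i)" for i
        have "(\<Sum>i<N. W1 i * (R i - s * a i)) = (\<Sum>i<N. W1 i * R i) - s * (\<Sum>i<N. W1 i * a i)"
          by (simp add: right_diff_distrib sum_subtractf sum_distrib_left mult.left_commute)
        then show ?thesis unfolding R_def[symmetric] Va by simp
      qed
      finally have e: "f x - f y = s * V\<^sup>2 + (\<Sum>i<N. W1 i * (relu (s * a i + b0 i) - relu (- (s * a i) + b0 i) - s * a i))" .
      have "\<bar>\<Sum>i<N. W1 i * (relu (s * a i + b0 i) - relu (- (s * a i) + b0 i) - s * a i)\<bar> \<le> K"
        unfolding K_def
        by (rule order_trans[OF sum_abs], rule sum_mono) 
           (unfold abs_mult, rule mult_left_mono, use relu_odd_bound[of "s * a _" "b0 _"] in auto)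
      then have "s * V\<^sup>2 - K \<le> \<bar>f x - f y\<bar>" unfolding e by linarith
      then have "(s * V\<^sup>2 - K) / (2 * s * V) \<le> \<bar>f x - f y\<bar> / euclid_dist d x y"
        unfolding dist using s V by (intro divide_right_mono) auto
      also have "\<dots> \<le> lip_const d f" unfolding f_def by (rule lip_ge_elem[OF xy ne])
      finally show ?thesis .
    qed
    show ?thesis
    proof (rule ccontr)
      assume "\<not> ?thesis"
      then have lt: "lip_const d f < V / 2" by (simp add: V_def v_def f_def)
      define e where "e = V / 2 - lip_const d f"
      have e: "e > 0" using lt by (simp add: e_def)
      define s where "s = (K + 1) / (2 * V * e)"
      have s: "s > 0" using K0 V e by (simp add: s_def)
      have "(s * V\<^sup>2 - K) / (2 * s * V) = V / 2 - K / (2 * s * V)"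
        using s V by (simp add: field_simps power2_eq_square)
      also have "K / (2 * s * V) = K * e / (K + 1)"
      proof -
        have "2 * s * V = (K + 1) / e" using V e K0 by (simp add: s_def field_simps)
        then show ?thesis using e K0 by simp
      qed
      also have "K * e / (K + 1) < e"
        using e K0 by (simp add: field_simps)
      then have "V / 2 - K * e / (K + 1) > lip_const d f" by (simp add: e_def)
      finally have "lip_const d f < (s * V\<^sup>2 - K) / (2 * s * V)" by simp
      then show False using key[OF s] by simp
    qed
  qed
qed



definition vecr :: "nat \<Rightarrow> rat list \<Rightarrow> nat \<Rightarrow> real" where
  "vecr d xs = (\<lambda>j. if j < d \<and> j < length xs then real_of_rat (xs ! j) else 0)"

definition ra :: "nat \<Rightarrow> real \<Rightarrow> rat" where
  "ra k z = of_int \<lfloor>z * real (Suc k)\<rfloor> / of_nat (Suc k)"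

lemma ra_tendsto: "(\<lambda>k. real_of_rat (ra k z)) \<longlonglongrightarrow> z"
proof (rule tendsto_sandwich[of "\<lambda>k. z - inverse (real (Suc k))" _ _ "\<lambda>_. z"])
  have e: "real_of_rat (ra k z) = \<lfloor>z * real (Suc k)\<rfloor> / real (Suc k)" for k
    by (simp add: ra_def of_rat_divide of_rat_add of_rat_of_nat_eq del: of_nat_Suc)
  show "\<forall>\<^sub>F k in sequentially. z - inverse (real (Suc k)) \<le> real_of_rat (ra k z)"
  proof (intro always_eventually allI)
    fix k
    have "z * real (Suc k) - 1 \<le> \<lfloor>z * real (Suc k)\<rfloor>" by linarith
    then have "(z * real (Suc k) - 1) / real (Suc k) \<le> \<lfloor>z * real (Suc k)\<rfloor> / real (Suc k)"
      by (intro divide_right_mono) auto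
    then show "z - inverse (real (Suc k)) \<le> real_of_rat (ra k z)"
      unfolding e by (simp add: field_simps)
  qed
  show "\<forall>\<^sub>F k in sequentially. real_of_rat (ra k z) \<le> z"
  proof (intro always_eventually allI)
    fix k
    have "\<lfloor>z * real (Suc k)\<rfloor> \<le> z * real (Suc k)" by linarith
    then have "\<lfloor>z * real (Suc k)\<rfloor> / real (Suc k) \<le> z * real (Suc k) / real (Suc k)"
      by (intro divide_right_mono) auto
    then show "real_of_rat (ra k z) \<le> z" unfolding e by simp
  qed
  show "(\<lambda>k. z - inverse (real (Suc k))) \<longlonglongrightarrow> z"
    using tendsto_diff[OF tendsto_const LIMSEQ_inverse_real_of_nat, of z] by simp
qed simp

lemma tendsto_relu[tendsto_intros]: "(g \<longlongrightarrow> l) F \<Longrightarrow> ((\<lambda>k. relu (g k)) \<longlongrightarrow> relu l) F"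
  unfolding relu_def by (intro tendsto_intros)

lemma net_tendsto:
  assumes "\<And>j. (\<lambda>k. X k j) \<longlonglongrightarrow> x j"
  shows "(\<lambda>k. shallow_net N d W0 W1 b0 b1 (X k)) \<longlonglongrightarrow> shallow_net N d W0 W1 b0 b1 x"
  unfolding shallow_net_def by (intro tendsto_intros assms)

lemma dist_tendsto:
  assumes "\<And>j. (\<lambda>k. X k j) \<longlonglongrightarrow> x j" "\<And>j. (\<lambda>k. Y k j) \<longlonglongrightarrow> y j"
  shows "(\<lambda>k. euclid_dist d (X k) (Y k)) \<longlonglongrightarrow> euclid_dist d x y"
  unfolding euclid_dist_def by (intro tendsto_intros assms)

lemma vecr_Rd: "vecr d xs \<in> Rd d" by (simp add: vecr_def Rd_def)

lemma vecr_approx: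
  assumes "x \<in> Rd d"
  shows "(\<lambda>k. vecr d (map (\<lambda>j. ra k (x j)) [0..<d]) j) \<longlonglongrightarrow> x j"
proof (cases "j < d")
  case True
  then show ?thesis by (simp add: vecr_def ra_tendsto)
next
  case False
  then have "x j = 0" using assms by (simp add: Rd_def)
  then show ?thesis using False by (simp add: vecr_def)
qed

lemma lip_ge_iff:
  assumes d: "d \<ge> 1"
  shows "(\<theta> \<le> lip_const d (shallow_net N d W0 W1 b0 b1)) \<longleftrightarrow>
    (\<forall>n::nat. \<exists>p::rat list \<times> rat list. 0 < euclid_dist d (vecr d (fst p)) (vecr d (snd p)) \<and>
        \<theta> - inverse (real (Suc n)) <
        \<bar>shallow_net N d W0 W1 b0 b1 (vecr d (fst p)) - shallow_net N d W0 W1 b0 b1 (vecr d (snd p))\<bar>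
          / euclid_dist d (vecr d (fst p)) (vecr d (snd p)))"
  (is "?L \<longleftrightarrow> (\<forall>n. \<exists>p. ?P n p)")
proof
  let ?f = "shallow_net N d W0 W1 b0 b1"
  assume L: ?L
  show "\<forall>n. \<exists>p. ?P n p"
  proof
    fix n
    have "\<theta> - inverse (real (Suc n)) < Sup (lipset d ?f)"
    proof -
      have "inverse (real (Suc n)) > 0" by simp
      then show ?thesis using L unfolding lip_const_lipset by linarith
    qed
    then obtain q where q: "q \<in> lipset d ?f" "\<theta> - inverse (real (Suc n)) < q"
      using less_cSupD[OF lipset_ne[OF d]] by blast
    then obtain x y where xy: "x \<in> Rd d" "y \<in> Rd d" "x \<noteq> y"
      and qd: "q = \<bar>?f x - ?f y\<bar> / euclid_dist d x y"
      unfolding lipset_def by blast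
    have dpos: "euclid_dist d x y > 0" by (rule euclid_pos[OF xy])
    define X where "X k = vecr d (map (\<lambda>j. ra k (x j)) [0..<d])" for k
    define Y where "Y k = vecr d (map (\<lambda>j. ra k (y j)) [0..<d])" for k
    have cX: "\<And>j. (\<lambda>k. X k j) \<longlonglongrightarrow> x j" unfolding X_def by (rule vecr_approx[OF xy(1)])
    have cY: "\<And>j. (\<lambda>k. Y k j) \<longlonglongrightarrow> y j" unfolding Y_def by (rule vecr_approx[OF xy(2)])
    have cd: "(\<lambda>k. euclid_dist d (X k) (Y k)) \<longlonglongrightarrow> euclid_dist d x y"
      by (rule dist_tendsto[OF cX cY])
    have cq: "(\<lambda>k. \<bar>?f (X k) - ?f (Y k)\<bar> / euclid_dist d (X k) (Y k)) \<longlonglongrightarrow> q"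
      unfolding qd using dpos
      by (intro tendsto_intros net_tendsto cX cY cd) auto
    have "eventually (\<lambda>k. 0 < euclid_dist d (X k) (Y k) \<and>
       \<theta> - inverse (real (Suc n)) < \<bar>?f (X k) - ?f (Y k)\<bar> / euclid_dist d (X k) (Y k)) sequentially"
      by (intro eventually_conj order_tendstoD(1)[OF cd dpos] order_tendstoD(1)[OF cq q(2)])
    then obtain k where "0 < euclid_dist d (X k) (Y k) \<and>
       \<theta> - inverse (real (Suc n)) < \<bar>?f (X k) - ?f (Y k)\<bar> / euclid_dist d (X k) (Y k)"
      by (auto simp: eventually_sequentially)
    then have "?P n (map (\<lambda>j. ra k (x j)) [0..<d], map (\<lambda>j. ra k (y j)) [0..<d])"
      by (simp add: X_def Y_def)
    then show "\<exists>p. ?P n p" by blast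
  qed
next
  let ?f = "shallow_net N d W0 W1 b0 b1"
  assume R: "\<forall>n. \<exists>p. ?P n p"
  show ?L
  proof (rule ccontr)
    assume "\<not> ?L"
    then have "0 < \<theta> - lip_const d ?f" by simp
    then obtain n where n: "inverse (real (Suc n)) < \<theta> - lip_const d ?f"
      using reals_Archimedean by blast
    obtain p where p: "?P n p" using R by blast
    have ne: "vecr d (fst p) \<noteq> vecr d (snd p)" using p by (auto simp: euclid_dist_def)
    have "\<bar>?f (vecr d (fst p)) - ?f (vecr d (snd p))\<bar> / euclid_dist d (vecr d (fst p)) (vecr d (snd p))
        \<le> lip_const d ?f"
      by (rule lip_ge_elem[OF vecr_Rd vecr_Rd ne])
    then show False using p n by linarith
  qed
qed



lemma meas_cong_borel: "g \<in> measurable M N' \<Longrightarrow> sets N' = sets borel \<Longrightarrow> g \<in> borel_measurable M"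
  using measurable_cong_sets[OF refl, of N' borel M] by simp

lemma relu_meas: "g \<in> borel_measurable M \<Longrightarrow> (\<lambda>\<omega>. relu (g \<omega>)) \<in> borel_measurable M"
  unfolding relu_def by (intro borel_measurable_max borel_measurable_const)

lemma net_meas:
  assumes D0: "\<forall>i. sets (D0 i) = sets borel" and D1: "sets D1 = sets borel"
  shows "(\<lambda>\<omega>. shallow_net N d (fst \<omega>) (fst (snd \<omega>)) (fst (snd (snd \<omega>))) (snd (snd (snd \<omega>))) x)
           \<in> borel_measurable (net_measure N d D0 D1)"
proof -
  let ?M = "net_measure N d D0 D1"
  let ?A = "PiM ({..<N} \<times> {..<d}) (\<lambda>_. density lborel (normal_density 0 (sqrt (2 / real N))))"
  let ?B = "PiM {..<N} (\<lambda>_. density lborel std_normal_density)"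
  let ?C = "PiM {..<N} D0"
  have M: "?M = ?A \<Otimes>\<^sub>M (?B \<Otimes>\<^sub>M (?C \<Otimes>\<^sub>M D1))" by (simp add: net_measure_def)
  have w0: "(\<lambda>\<omega>. fst \<omega> (i,j)) \<in> borel_measurable ?M" if "i < N" "j < d" for i j
    unfolding M
    by (rule meas_cong_borel[OF measurable_compose[OF measurable_fst measurable_component_singleton]])
       (use that in auto)
  have w1: "(\<lambda>\<omega>. fst (snd \<omega>) i) \<in> borel_measurable ?M" if "i < N" for i
    unfolding M
    by (rule meas_cong_borel[OF measurable_compose[OF measurable_compose[OF measurable_snd measurable_fst] measurable_component_singleton]])
       (use that in auto)
  have b0: "(\<lambda>\<omega>. fst (snd (snd \<omega>)) i) \<in> borel_measurable ?M" if "i < N" for i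
    unfolding M
    by (rule meas_cong_borel[OF measurable_compose[OF measurable_compose[OF measurable_compose[OF measurable_snd measurable_snd] measurable_fst] measurable_component_singleton]])
       (use that D0 in auto)
  have b1: "(\<lambda>\<omega>. snd (snd (snd \<omega>))) \<in> borel_measurable ?M"
    unfolding M
    by (rule meas_cong_borel[OF measurable_compose[OF measurable_compose[OF measurable_snd measurable_snd] measurable_snd]])
       (use D1 in auto)
  show ?thesis unfolding shallow_net_def
    by (intro borel_measurable_add borel_measurable_sum borel_measurable_times borel_measurable_const
        w0 w1 b0 b1 relu_meas) auto
qed



lemma lip_set_meas:
  assumes d: "d \<ge> 1" and D0: "\<forall>i. sets (D0 i) = sets borel" and D1: "sets D1 = sets borel"
  shows "{\<omega> \<in> space (net_measure N d D0 D1).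
     \<theta> \<le> lip_const d (shallow_net N d (fst \<omega>) (fst (snd \<omega>)) (fst (snd (snd \<omega>))) (snd (snd (snd \<omega>))))}
     \<in> sets (net_measure N d D0 D1)"
proof -
  let ?M = "net_measure N d D0 D1"
  let ?F = "\<lambda>\<omega>. shallow_net N d (fst \<omega>) (fst (snd \<omega>)) (fst (snd (snd \<omega>))) (snd (snd (snd \<omega>)))"
  have m: "(\<lambda>\<omega>. ?F \<omega> x) \<in> borel_measurable ?M" for x by (rule net_meas[OF D0 D1])
  have eq: "{\<omega> \<in> space ?M. \<theta> \<le> lip_const d (?F \<omega>)} =
    {\<omega> \<in> space ?M. \<forall>n::nat. \<exists>p::rat list \<times> rat list. 0 < euclid_dist d (vecr d (fst p)) (vecr d (snd p)) \<and>
        \<theta> - inverse (real (Suc n)) <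
        \<bar>?F \<omega> (vecr d (fst p)) - ?F \<omega> (vecr d (snd p))\<bar> / euclid_dist d (vecr d (fst p)) (vecr d (snd p))}"
    using lip_ge_iff[OF d] by blast
  show ?thesis unfolding eq
  proof (intro sets.sets_Collect_countable_All sets.sets_Collect_countable_Ex sets.sets_Collect_conj)
    fix n :: nat and p :: "rat list \<times> rat list"
    show "{\<omega> \<in> space ?M. 0 < euclid_dist d (vecr d (fst p)) (vecr d (snd p))} \<in> sets ?M"
      by (rule sets.sets_Collect_const)
    show "{\<omega> \<in> space ?M. \<theta> - inverse (real (Suc n)) <
        \<bar>?F \<omega> (vecr d (fst p)) - ?F \<omega> (vecr d (snd p))\<bar> / euclid_dist d (vecr d (fst p)) (vecr d (snd p))} \<in> sets ?M"
      by (intro borel_measurable_less borel_measurable_const borel_measurable_divide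
          borel_measurable_abs borel_measurable_diff m)
  qed
qed

lemma W1_event:
  fixes N :: nat and u :: real
  assumes N: "N \<ge> 1" and u: "u \<ge> 0"
  shows "measure (PiM {..<N} (\<lambda>_. density lborel std_normal_density))
     {w \<in> space (PiM {..<N} (\<lambda>_. density lborel std_normal_density)).
        (max 0 (sqrt N - u))\<^sup>2 \<le> (\<Sum>i<N. (w i)\<^sup>2)} \<ge> 1 - exp (- (u\<^sup>2 / 8))"
proof -
  let ?B = "PiM {..<N} (\<lambda>_. density lborel std_normal_density)"
  interpret B: prob_space ?B by (rule prob_space_PiM) (use prob_space_normal_density in auto)
  have ind: "B.indep_vars (\<lambda>_. borel) (\<lambda>k \<omega>. \<omega> k) {..<N}"
    by (rule PiM_coord_indep) (use prob_space_normal_density N in \<open>auto simp: lessThan_empty_iff\<close>)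
  show ?thesis
  proof (rule B.chi_lower[of "\<lambda>k \<omega>. \<omega> k" N u])
    show "B.indep_vars (\<lambda>_. borel) (\<lambda>k \<omega>. \<omega> k) {..<N}" by (rule ind)
  next
    fix j assume "j < N"
    then show "distributed ?B lborel (\<lambda>\<omega>. \<omega> j) std_normal_density"
      by (intro PiM_coord_distributed) auto
  qed (rule u)
qed



theorem theorem6p1:
  "\<exists>c>0. \<forall>(d::nat) (N::nat) (D0::nat \<Rightarrow> real measure) (D1::real measure) (t::real) (u::real).
     d \<ge> 1 \<longrightarrow> N \<ge> 1 \<longrightarrow>
     (\<forall>i. prob_space (D0 i) \<and> sets (D0 i) = sets borel) \<longrightarrow>
     prob_space D1 \<longrightarrow> sets D1 = sets borel \<longrightarrow>
     t \<ge> 0 \<longrightarrow> u \<ge> 0 \<longrightarrow>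
     measure (net_measure N d D0 D1)
       {(W0, W1, b0, b1) \<in> space (net_measure N d D0 D1).
          lip_const d (shallow_net N d W0 W1 b0 b1)
            \<ge> 1 / sqrt 2 * max 0 (1 - u / sqrt (real N)) * max 0 (sqrt (real d) - t)}
     \<ge> max 0 (1 - 2 * exp (- c * t\<^sup>2)) * max 0 (1 - 2 * exp (- c * u\<^sup>2))"
proof (intro exI[of _ "1/8"] conjI allI impI)
  fix d N :: nat and D0 :: "nat \<Rightarrow> real measure" and D1 :: "real measure" and t u :: real
  assume d: "d \<ge> 1" and N: "N \<ge> 1" and D0: "\<forall>i. prob_space (D0 i) \<and> sets (D0 i) = sets borel"
    and D1p: "prob_space D1" and D1s: "sets D1 = sets borel" and t: "t \<ge> 0" and u: "u \<ge> 0"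
  define \<sigma> where "\<sigma> = sqrt (2 / real N)"
  have \<sigma>: "\<sigma> > 0" using N by (simp add: \<sigma>_def)
  define A where "A = PiM ({..<N} \<times> {..<d}) (\<lambda>_. density lborel (normal_density 0 \<sigma>))"
  define B where "B = PiM {..<N} (\<lambda>_. density lborel std_normal_density)"
  define C where "C = PiM {..<N} D0"
  define R where "R = B \<Otimes>\<^sub>M (C \<Otimes>\<^sub>M D1)"
  define M where "M = net_measure N d D0 D1"
  have MAR: "M = A \<Otimes>\<^sub>M R" by (simp add: M_def net_measure_def A_def R_def B_def C_def \<sigma>_def)
  interpret A: prob_space A unfolding A_def
    by (rule prob_space_PiM) (use prob_space_normal_density \<sigma> in auto)
  interpret B: prob_space B unfolding B_def
    by (rule prob_space_PiM) (use prob_space_normal_density in auto)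
  interpret C: prob_space C unfolding C_def
    by (rule prob_space_PiM) (use D0 in auto)
  interpret D1: prob_space D1 by (rule D1p)
  interpret CD: prob_space "C \<Otimes>\<^sub>M D1" by (rule prob_space_pair) unfold_locales
  interpret R: prob_space R unfolding R_def by (rule prob_space_pair) unfold_locales
  interpret AR: pair_sigma_finite A R by unfold_locales
  interpret BCD: pair_sigma_finite B "C \<Otimes>\<^sub>M D1" by unfold_locales
  interpret M: prob_space M unfolding MAR by (rule prob_space_pair) unfold_locales

  define \<theta> where "\<theta> = 1 / sqrt 2 * max 0 (1 - u / sqrt (real N)) * max 0 (sqrt (real d) - t)"
  define F where "F \<omega> = shallow_net N d (fst \<omega>) (fst (snd \<omega>)) (fst (snd (snd \<omega>))) (snd (snd (snd \<omega>)))"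
    for \<omega> :: "(nat \<times> nat \<Rightarrow> real) \<times> (nat \<Rightarrow> real) \<times> (nat \<Rightarrow> real) \<times> real"
  define S where "S = {\<omega> \<in> space M. \<theta> \<le> lip_const d (F \<omega>)}"
  have Seq: "{(W0, W1, b0, b1) \<in> space (net_measure N d D0 D1).
          lip_const d (shallow_net N d W0 W1 b0 b1)
            \<ge> 1 / sqrt 2 * max 0 (1 - u / sqrt (real N)) * max 0 (sqrt (real d) - t)} = S"
    unfolding S_def F_def M_def \<theta>_def by (intro Collect_cong) (simp add: split_beta)
  have Ssets: "S \<in> sets M" unfolding S_def F_def M_def
    by (rule lip_set_meas[OF d]) (use D0 D1s in auto)

  define pt where "pt = 1 - exp (- (t\<^sup>2 / 8))"
  define pu where "pu = 1 - exp (- (u\<^sup>2 / 8))"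
  define mu where "mu = max 0 (sqrt (real N) - u)"
  define mt where "mt = max 0 (sqrt (real d) - t)"
  define E1 where "E1 = {w \<in> space B. mu\<^sup>2 \<le> (\<Sum>i<N. (w i)\<^sup>2)}"
  have E1p: "B.prob E1 \<ge> pu" unfolding E1_def pu_def mu_def B_def by (rule W1_event[OF N u])
  have Bc: "(\<lambda>x. x i) \<in> borel_measurable B" if "i \<in> {..<N}" for i
    unfolding B_def by (rule meas_cong_borel[OF measurable_component_singleton]) (use that in auto)
  have E1s: "E1 \<in> sets B" unfolding E1_def
    by (intro borel_measurable_le borel_measurable_const borel_measurable_sum borel_measurable_power Bc)

  have \<theta>eq: "\<theta> = \<sigma> / 2 * mu * mt"
  proof -
    have sN: "sqrt (real N) > 0" using N by simp
    define X where "X = max 0 (1 - u / sqrt (real N))"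
    have mu_eq: "mu = sqrt (real N) * X"
      unfolding mu_def X_def using sN by (simp add: max_def field_simps)
    have sN2: "\<sigma> * sqrt (real N) = sqrt 2"
      unfolding \<sigma>_def using N by (simp add: real_sqrt_mult[symmetric])
    have s2: "sqrt 2 / 2 = 1 / sqrt (2::real)"
      by (simp add: field_simps)
    have "\<sigma> / 2 * mu * mt = (\<sigma> * sqrt (real N)) / 2 * X * mt"
      unfolding mu_eq by (simp add: mult.assoc mult.commute mult.left_commute)
    also have "\<dots> = 1 / sqrt 2 * X * mt" unfolding sN2 s2 ..
    finally show ?thesis unfolding \<theta>_def mt_def X_def by simp
  qed

  have slice: "emeasure A ((\<lambda>x. (x, y)) -` S) \<ge> ennreal (max 0 pt)"
    if y: "y \<in> space R" and yE: "fst y \<in> E1" for y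
  proof -
    have sl: "(\<lambda>x. (x, y)) -` S = {x \<in> space A. \<theta> \<le> lip_const d (F (x, y))}"
      using y by (auto simp: S_def MAR space_pair_measure)
    have slm: "(\<lambda>x. (x, y)) -` S \<in> sets A" using Ssets unfolding MAR by (rule sets_Pair2)
    define w where "w = fst y"
    define r where "r = (\<Sum>i<N. (w i)\<^sup>2)"
    have r: "mu\<^sup>2 \<le> r" using yE by (simp add: E1_def r_def w_def)
    have pt1: "max 0 pt \<le> 1" by (simp add: pt_def)
    show ?thesis
    proof (cases "r = 0")
      case True
      then have "mu = 0" using r by (simp add: mu_def)
      then have "\<theta> = 0" using \<theta>eq by simp
      then have "(\<lambda>x. (x, y)) -` S = space A"
        unfolding sl F_def using lip_nonneg[OF d] by auto
      then show ?thesis using pt1 A.emeasure_space_1 by simp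
    next
      case False
      then have rpos: "r > 0" by (simp add: r_def sum_nonneg order.not_eq_order_implies_strict)
      define G where "G = {W \<in> space A. \<sigma>\<^sup>2 * r * mt\<^sup>2 \<le> (\<Sum>j<d. (\<Sum>i<N. w i * W (i,j))\<^sup>2)}"
      have Gp: "A.prob G \<ge> pt" unfolding G_def A_def r_def mt_def pt_def
        by (rule W0_event[OF \<sigma> _ t d]) (use rpos in \<open>simp add: r_def\<close>)
      have "G \<subseteq> (\<lambda>x. (x, y)) -` S"
      proof
        fix W assume W: "W \<in> G"
        have "\<theta> = \<sigma> / 2 * mu * mt" by (rule \<theta>eq)
        also have "\<dots> \<le> \<sigma> / 2 * sqrt r * mt"
        proof -
          have "sqrt (mu\<^sup>2) \<le> sqrt r" using r by (rule real_sqrt_le_mono)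
          moreover have "mu \<ge> 0" by (simp add: mu_def)
          ultimately have "mu \<le> sqrt r" by simp
          then show ?thesis using \<sigma> by (intro mult_right_mono mult_left_mono) (auto simp: mt_def)
        qed
        also have "\<dots> = sqrt (\<sigma>\<^sup>2 * r * mt\<^sup>2) / 2"
          using \<sigma> by (simp add: real_sqrt_mult mt_def)
        also have "\<dots> \<le> sqrt (\<Sum>j<d. (\<Sum>i<N. w i * W (i,j))\<^sup>2) / 2"
          using W by (simp add: G_def)
        also have "\<dots> \<le> lip_const d (F (W, y))"
        proof -
          have "sqrt (\<Sum>j<d. (\<Sum>i<N. fst y i * W (i,j))\<^sup>2) / 2
             \<le> lip_const d (shallow_net N d W (fst y) (fst (snd y)) (snd (snd y)))"
            by (rule lip_lower_v[OF d])
          then show ?thesis unfolding F_def by (simp add: w_def)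
        qed
        finally show "W \<in> (\<lambda>x. (x, y)) -` S" using W by (simp add: sl G_def)
      qed
      then have "emeasure A G \<le> emeasure A ((\<lambda>x. (x, y)) -` S)"
        by (rule emeasure_mono) (rule slm)
      moreover have "ennreal (max 0 pt) \<le> emeasure A G"
        using Gp by (simp add: A.emeasure_eq_measure)
      ultimately show ?thesis by simp
    qed
  qed

  have "emeasure M S = (\<integral>\<^sup>+y. emeasure A ((\<lambda>x. (x, y)) -` S) \<partial>R)"
    unfolding MAR by (rule AR.emeasure_pair_measure_alt2) (use Ssets MAR in simp)
  also have "\<dots> \<ge> (\<integral>\<^sup>+y. ennreal (max 0 pt) * indicator (E1 \<times> space (C \<Otimes>\<^sub>M D1)) y \<partial>R)"
  proof (rule nn_integral_mono)
    fix y assume y: "y \<in> space R"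
    show "ennreal (max 0 pt) * indicator (E1 \<times> space (C \<Otimes>\<^sub>M D1)) y \<le> emeasure A ((\<lambda>x. (x, y)) -` S)"
    proof (cases "fst y \<in> E1")
      case True
      then show ?thesis using slice[OF y True] by (simp add: indicator_def)
    next
      case False
      then show ?thesis by (simp add: indicator_def mem_Times_iff)
    qed
  qed
  also have "(\<integral>\<^sup>+y. ennreal (max 0 pt) * indicator (E1 \<times> space (C \<Otimes>\<^sub>M D1)) y \<partial>R)
      = ennreal (max 0 pt) * emeasure R (E1 \<times> space (C \<Otimes>\<^sub>M D1))"
    by (rule nn_integral_cmult_indicator) (simp add: R_def E1s)
  also have "emeasure R (E1 \<times> space (C \<Otimes>\<^sub>M D1)) = emeasure B E1"
    unfolding R_def using CD.emeasure_pair_measure_Times[OF E1s sets.top] by (simp add: CD.emeasure_space_1)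
  finally have a: "ennreal (max 0 pt) * emeasure B E1 \<le> emeasure M S" .
  have b: "ennreal (max 0 pu) \<le> emeasure B E1" using E1p by (simp add: B.emeasure_eq_measure)
  have "ennreal (max 0 pt) * ennreal (max 0 pu) \<le> emeasure M S"
    by (rule order_trans[OF mult_left_mono[OF b zero_le] a])
  then have "ennreal (max 0 pt * max 0 pu) \<le> ennreal (measure M S)"
    by (simp only: M.emeasure_eq_measure ennreal_mult max.cobounded1)
  then have main: "max 0 pt * max 0 pu \<le> measure M S"
    by (subst (asm) ennreal_le_iff) auto
  have "max 0 (1 - 2 * exp (- (1/8) * t\<^sup>2)) * max 0 (1 - 2 * exp (- (1/8) * u\<^sup>2)) \<le> max 0 pt * max 0 pu"
    unfolding pt_def pu_def by (intro mult_mono) auto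
  then show "max 0 (1 - 2 * exp (- (1/8) * t\<^sup>2)) * max 0 (1 - 2 * exp (- (1/8) * u\<^sup>2))
     \<le> measure (net_measure N d D0 D1)
       {(W0, W1, b0, b1) \<in> space (net_measure N d D0 D1).
          lip_const d (shallow_net N d W0 W1 b0 b1)
            \<ge> 1 / sqrt 2 * max 0 (1 - u / sqrt (real N)) * max 0 (sqrt (real d) - t)}"
    unfolding Seq using main by (simp add: M_def)
qed simp


end
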